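(* Let $V$ be a finite set with $n=|V|\ge 3$, and let $x=(V,E_x)$ and $y=(V,E_y)$ be two undirected Hamiltonian cycles on $V$. Let $E=E_x\uplus E_y$ be the edge multiset of the 4-regular multigraph $x\cup y$ (an edge lying in both cycles appears as two distinct parallel copies, one from $E_x$ and one from $E_y$); let $c=|E_x\cap E_y|$ be the number of edges common to both cycles, and let $E_x\setminus E_y$ (resp. $E_y\setminus E_x$) denote the copies coming from $x$ (resp. $y$) of edges that do not belong to the other cycle. For $v\in V$ let $E_v\subseteq E$ be the set of edge copies incident to $v$, and for $S\subseteq V$ let $E_S\subseteq E$ be the set of edge copies with both endpoints in $S$. Consider a vector $(x_e)_{e\in E}$ satisfying (1) $\sum_{e\in E}x_e=n$; (2) $\sum_{e\in E_v}x_e=2$ for all $v\in V$; (3) $\sum_{e\in E_x\setminus E_y}x_e\le n-c-2$; (4) $\sum_{e\in E_y\setminus E_x}x_e\le n-c-2$; (5) $\sum_{e\in E_S}x_e\le |S|-1$ for every $S\subsetneq V$ with $|S|\ge 2$; (6) $\sum_{e\in E_S}x_e\ge |E_S|-|S|+1$ for every $S\subsetneq V$ with $|S|\ge 2$; (7) $x_e\in\{0,1\}$ for all $e\in E$. Then a vector $(x_e)_{e\in E}\in\{0,1\}^E$ satisfies (1)–(7) if and only if, setting $z=\{e\in E: x_e=1\}$ and $w=\{e\in E:x_e=0\}$, both $z$ and $w$ are (edge sets of) Hamiltonian cycles on $V$ and the Hamiltonian cycle $z$ is different from both $x$ and $y$ (equivalently, $\{z,w\}$ is a Hamiltonian decomposition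 of $x\cup y$ into two edge-disjoint Hamiltonian cycles different from $x$ and $y$).
   Context: A Hamiltonian decomposition of a regular multigraph is a partition of its edge (multi)set into Hamiltonian cycles. For Hamiltonian cycles $x=(V,E_x)$, $y=(V,E_y)$ on the same vertex set, $x\cup y$ denotes the multigraph $(V,E_x\uplus E_y)$ containing all edges of both cycles (common edges with multiplicity 2). Two Hamiltonian cycles are considered equal if they have the same underlying edge set on $V$. *)

theory Defs
  imports Complex_Main
begin

definition ham_cycle :: "'a set \<Rightarrow> 'a set set \<Rightarrow> bool" where
  "ham_cycle V H \<longleftrightarrow> (\<exists>vs. distinct vs \<and> set vs = V \<and>
     H = {{vs ! i, vs ! (Suc i mod length vs)} | i. i < length vs})"

text \<open>Edge copies of the multigraph x \<union> y: an edge together with a tag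
(True = copy coming from x, False = copy coming from y).\<close>

definition union_copies :: "'a set set \<Rightarrow> 'a set set \<Rightarrow> ('a set \<times> bool) set" where
  "union_copies Exs Eys = (\<lambda>e. (e, True)) ` Exs \<union> (\<lambda>e. (e, False)) ` Eys"

definition ham_copies :: "'a set \<Rightarrow> ('a set \<times> bool) set \<Rightarrow> bool" where
  "ham_copies V Z \<longleftrightarrow> inj_on fst Z \<and> ham_cycle V (fst ` Z)"

end

theory Submission
  imports Defs
begin


definition tf :: "'a set \<Rightarrow> 'a set set \<Rightarrow> bool" where
 "tf V F \<longleftrightarrow> (\<forall>e\<in>F. e \<subseteq> V \<and> card e = 2) \<and> (\<forall>v\<in>V. card {e\<in>F. v\<in>e} = 2)"

lemma finite_edges: "finite V \<Longrightarrow> \<forall>e\<in>F. e \<subseteq> V \<Longrightarrow> finite F"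
  by (meson PowI finite_Pow_iff finite_subset subsetI)

lemma handshake:
  assumes "finite V" "\<forall>e\<in>F. e \<subseteq> V" "S \<subseteq> V"
  shows "(\<Sum>v\<in>S. card {e\<in>F. v\<in>e}) = (\<Sum>e\<in>F. card (e \<inter> S))"
proof -
  have fF: "finite F" using finite_edges assms by blast
  have fS: "finite S" using assms finite_subset by blast
  have "(\<Sum>v\<in>S. card {e\<in>F. v\<in>e}) = (\<Sum>v\<in>S. \<Sum>e\<in>F. if v\<in>e then 1 else 0)"
    using fF by (intro sum.cong refl) (simp add: sum.inter_filter[symmetric])
  also have "\<dots> = (\<Sum>e\<in>F. \<Sum>v\<in>S. if v\<in>e then 1 else 0)" by (rule sum.swap)
  also have "\<dots> = (\<Sum>e\<in>F. card (e \<inter> S))"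
  proof (intro sum.cong refl)
    fix e assume "e \<in> F"
    have "(\<Sum>v\<in>S. if v\<in>e then 1 else 0) = card {v\<in>S. v\<in>e}"
      using fS by (simp add: sum.inter_filter[symmetric])
    also have "{v\<in>S. v\<in>e} = e \<inter> S" by auto
    finally show "(\<Sum>v\<in>S. if v\<in>e then 1 else 0) = card (e \<inter> S)" .
  qed
  finally show ?thesis .
qed

lemma tf_card: assumes "finite V" "tf V F" shows "card F = card V"
proof -
  have e: "\<forall>e\<in>F. e \<subseteq> V" using assms unfolding tf_def by auto
  have "(\<Sum>v\<in>V. card {e\<in>F. v\<in>e}) = (\<Sum>e\<in>F. card (e \<inter> V))"
    using handshake[OF assms(1) e] by simp
  moreover have "(\<Sum>v\<in>V. card {e\<in>F. v\<in>e}) = 2 * card V"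
    using assms unfolding tf_def by simp
  moreover have "(\<Sum>e\<in>F. card (e \<inter> V)) = 2 * card F"
    using assms unfolding tf_def by (simp add: Int_absorb2)
  ultimately show ?thesis by simp
qed

lemma Suc_mod_lt: "i < n \<Longrightarrow> Suc i mod n = (if Suc i = n then 0 else Suc i)"
  by (simp add: mod_Suc)

lemma ham_tf:
  assumes h: "ham_cycle V H" and n3: "card V \<ge> 3"
  shows "tf V H"
proof -
  obtain vs where d: "distinct vs" and sv: "set vs = V"
    and H: "H = {{vs ! i, vs ! (Suc i mod length vs)} | i. i < length vs}"
    using h unfolding ham_cycle_def by blast
  define n where "n = length vs"
  have nV: "n = card V" using d sv distinct_card n_def by metis
  define ed where "ed i = {vs ! i, vs ! (Suc i mod n)}" for i
  have H': "H = ed ` {..<n}" unfolding H ed_def n_def by auto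
  have ne: "vs ! i \<noteq> vs ! (Suc i mod n)" if "i < n" for i
  proof -
    have "Suc i mod n \<noteq> i" using that n3 nV Suc_mod_lt[OF that] by auto
    moreover have "Suc i mod n < n" using that by simp
    ultimately show ?thesis using d that n_def nth_eq_iff_index_eq by metis
  qed
  have edges: "e \<subseteq> V \<and> card e = 2" if eH: "e \<in> H" for e
  proof -
    obtain i where i: "i < n" "e = ed i" using eH H' by auto
    have "Suc i mod n < n" using i by simp
    then show ?thesis using i ne[OF i(1)] sv n_def unfolding ed_def
      by (auto simp: nth_mem)
  qed
  have deg: "card {e\<in>H. v\<in>e} = 2" if vV: "v \<in> V" for v
  proof -
    obtain j where j: "j < n" "v = vs ! j" using vV sv n_def by (metis in_set_conv_nth)
    define p where "p = (if j = 0 then n - 1 else j - 1)"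
    have p: "p < n" "Suc p mod n = j" using j n3 nV unfolding p_def by (auto simp: Suc_mod_lt)
    have eq: "{e\<in>H. v\<in>e} = {ed j, ed p}"
    proof
      show "{e\<in>H. v\<in>e} \<subseteq> {ed j, ed p}"
      proof
        fix e assume "e \<in> {e\<in>H. v\<in>e}"
        then obtain i where i: "i < n" "e = ed i" "v \<in> ed i" using H' by auto
        have si: "Suc i mod n < n" using i by simp
        have "vs ! j = vs ! i \<or> vs ! j = vs ! (Suc i mod n)" using i j unfolding ed_def by auto
        then have "j = i \<or> j = Suc i mod n" using d si i j n_def nth_eq_iff_index_eq by metis
        then have "i = j \<or> i = p" using i(1) j(1) unfolding p_def by (auto simp: Suc_mod_lt split: if_splits)
        then show "e \<in> {ed j, ed p}" using i by auto
      qed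
    next
      show "{ed j, ed p} \<subseteq> {e\<in>H. v\<in>e}" using j p H' unfolding ed_def by auto
    qed
    have "ed j \<noteq> ed p"
    proof
      assume a: "ed j = ed p"
      have "vs ! (Suc j mod n) \<noteq> vs ! j" using ne j by metis
      then have "vs ! (Suc j mod n) = vs ! p" using a p unfolding ed_def by (auto simp: doubleton_eq_iff)
      moreover have "Suc j mod n < n" using j by simp
      ultimately have "Suc j mod n = p" using d p n_def nth_eq_iff_index_eq by metis
      then show False using j n3 nV unfolding p_def by (auto simp: Suc_mod_lt split: if_splits)
    qed
    then show ?thesis using eq by simp
  qed
  show ?thesis unfolding tf_def using edges deg by blast
qed




lemma tf_sub_count:
  assumes fV: "finite V" and t: "tf V F" and S: "S \<subseteq> V"
    and cr: "e0 \<in> F" "card (e0 \<inter> S) = 1"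
  shows "card {e\<in>F. e \<subseteq> S} < card S"
proof -
  have e: "\<forall>e\<in>F. e \<subseteq> V" using t unfolding tf_def by auto
  have fF: "finite F" using finite_edges[OF fV e] .
  have "(\<Sum>v\<in>S. card {e\<in>F. v\<in>e}) = (\<Sum>e\<in>F. card (e \<inter> S))"
    using handshake[OF fV e S] .
  moreover have "(\<Sum>v\<in>S. card {e\<in>F. v\<in>e}) = 2 * card S"
    using t S unfolding tf_def by (simp add: subset_iff)
  moreover have "(\<Sum>e\<in>F. card (e \<inter> S)) = (\<Sum>e\<in>{e\<in>F. e \<subseteq> S}. card (e \<inter> S)) + (\<Sum>e\<in>F - {e\<in>F. e \<subseteq> S}. card (e \<inter> S))"
    using fF by (subst sum.subset_diff[of "{e\<in>F. e \<subseteq> S}"]) auto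
  moreover have "(\<Sum>e\<in>{e\<in>F. e \<subseteq> S}. card (e \<inter> S)) = 2 * card {e\<in>F. e \<subseteq> S}"
    using t unfolding tf_def by (simp add: Int_absorb2)
  moreover have "card (e0 \<inter> S) \<le> (\<Sum>e\<in>F - {e\<in>F. e \<subseteq> S}. card (e \<inter> S))"
  proof (rule member_le_sum)
    show "e0 \<in> F - {e\<in>F. e \<subseteq> S}" using cr t unfolding tf_def
      by (auto simp: Int_absorb2)
  qed (use fF in auto)
  ultimately have "2 * card {e\<in>F. e \<subseteq> S} + 1 \<le> 2 * card S" using cr by linarith
  then show ?thesis by linarith
qed

lemma ham_sub:
  assumes fV: "finite V" and h: "ham_cycle V H" and n3: "card V \<ge> 3"
    and S: "S \<subset> V" "S \<noteq> {}"
  shows "card {e\<in>H. e \<subseteq> S} < card S"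
proof -
  have t: "tf V H" using ham_tf h n3 by blast
  obtain vs where d: "distinct vs" and sv: "set vs = V"
    and H: "H = {{vs ! i, vs ! (Suc i mod length vs)} | i. i < length vs}"
    using h unfolding ham_cycle_def by blast
  define n where "n = length vs"
  have n0: "n > 0" using sv S n_def by auto
  have "\<exists>i<n. vs ! i \<in> S \<and> vs ! (Suc i mod n) \<notin> S"
  proof (rule ccontr)
    assume "\<not> ?thesis"
    then have cl: "\<And>i. i < n \<Longrightarrow> vs ! i \<in> S \<Longrightarrow> vs ! (Suc i mod n) \<in> S" by blast
    obtain v0 where "v0 \<in> S" using S by blast
    then have "v0 \<in> set vs" using S sv by blast
    then obtain j where j: "j < n" "vs ! j \<in> S" using \<open>v0 \<in> S\<close> n_def by (auto simp: in_set_conv_nth)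
    have all: "vs ! ((j + k) mod n) \<in> S" for k
    proof (induction k)
      case 0 then show ?case using j by simp
    next
      case (Suc k)
      have "vs ! (Suc ((j + k) mod n) mod n) \<in> S" using cl Suc n0 by simp
      then show ?case by (simp add: mod_Suc_eq)
    qed
    have "V \<subseteq> S"
    proof
      fix v assume "v \<in> V"
      then obtain i where i: "i < n" "v = vs ! i" using sv n_def by (metis in_set_conv_nth)
      have "(j + (i + n - j)) mod n = i" using i j by simp
      then show "v \<in> S" using all[of "i + n - j"] i by simp
    qed
    then show False using S by auto
  qed
  then obtain i where i: "i < n" "vs ! i \<in> S" "vs ! (Suc i mod n) \<notin> S" by blast
  define e0 where "e0 = {vs ! i, vs ! (Suc i mod n)}"
  have "e0 \<in> H" using H i n_def e0_def by auto
  moreover have "e0 \<inter> S = {vs ! i}" using i e0_def by auto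
  ultimately show ?thesis using tf_sub_count[OF fV t psubset_imp_subset[OF S(1)], of e0] by simp
qed

lemma tf_inter:
  assumes fV: "finite V" and t1: "tf V H1" and t2: "tf V H2" and ne: "H1 \<noteq> H2"
  shows "card (H1 \<inter> H2) + 2 \<le> card V"
proof (rule ccontr)
  assume a: "\<not> ?thesis"
  have c1: "card H1 = card V" and c2: "card H2 = card V" using tf_card fV t1 t2 by auto
  have f1: "finite H1" using finite_edges[OF fV, of H1] t1 unfolding tf_def by blast
  have f2: "finite H2" using finite_edges[OF fV, of H2] t2 unfolding tf_def by blast
  have le: "card (H1 \<inter> H2) \<le> card V" using c1 f1 by (metis card_mono inf_le1)
  show False
  proof (cases "card (H1 \<inter> H2) = card V")
    case True
    then have "H1 \<inter> H2 = H1" using c1 f1 by (metis card_subset_eq inf_le1)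
    moreover have "H1 \<inter> H2 = H2" using True c2 f2 by (metis card_subset_eq inf_le2)
    ultimately show False using ne by simp
  next
    case False
    then have cc: "card (H1 \<inter> H2) + 1 = card V" using a le by linarith
    have "card (H1 - H2) = card H1 - card (H1 \<inter> H2)" using f1 by (simp add: card_Diff_subset_Int)
    then have "card (H1 - H2) = 1" using c1 cc by simp
    then obtain e1 where e1: "H1 - H2 = {e1}" using card_1_singletonE by blast
    have "card (H2 - H1) = card H2 - card (H2 \<inter> H1)" using f2 by (simp add: card_Diff_subset_Int)
    then have "card (H2 - H1) = 1" using c2 cc by (simp add: Int_commute)
    then obtain e2 where e2: "H2 - H1 = {e2}" using card_1_singletonE by blast
    have split: "card {e\<in>H. v\<in>e} = card {e\<in>H1 \<inter> H2. v\<in>e} + (if v \<in> ed then 1 else 0)"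
      if "H - (H1 \<inter> H2) = {ed}" "H1 \<inter> H2 \<subseteq> H" "finite H" for H ed v
    proof -
      have "{e\<in>H. v\<in>e} = {e\<in>H1 \<inter> H2. v\<in>e} \<union> {e\<in>{ed}. v\<in>e}" using that by blast
      moreover have "{e\<in>H1 \<inter> H2. v\<in>e} \<inter> {e\<in>{ed}. v\<in>e} = {}" using that by blast
      moreover have "finite {e\<in>H1 \<inter> H2. v\<in>e}" using that(2,3) finite_subset[of "{e\<in>H1 \<inter> H2. v\<in>e}" H] by blast
      moreover have "card {e\<in>{ed}. v\<in>e} = (if v \<in> ed then 1 else 0)"
      proof (cases "v \<in> ed")
        case True then have "{e\<in>{ed}. v\<in>e} = {ed}" by auto
        then show ?thesis using True by simp
      qed simp
      moreover have "finite {e\<in>{ed}. v\<in>e}" by simp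
      ultimately show ?thesis using card_Un_disjoint[of "{e\<in>H1 \<inter> H2. v\<in>e}" "{e\<in>{ed}. v\<in>e}"] by presburger
    qed
    have "v \<in> e1 \<longleftrightarrow> v \<in> e2" if "v \<in> V" for v
    proof -
      have "card {e\<in>H1. v\<in>e} = 2" "card {e\<in>H2. v\<in>e} = 2" using t1 t2 that unfolding tf_def by auto
      moreover have "card {e\<in>H1. v\<in>e} = card {e\<in>H1 \<inter> H2. v\<in>e} + (if v \<in> e1 then 1 else 0)"
        proof -
        have "H1 - H1 \<inter> H2 = {e1}" using e1 by blast
        then show ?thesis using split[of H1 e1 v] f1 by blast
      qed
      moreover have "card {e\<in>H2. v\<in>e} = card {e\<in>H1 \<inter> H2. v\<in>e} + (if v \<in> e2 then 1 else 0)"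
        proof -
        have "H2 - H1 \<inter> H2 = {e2}" using e2 by blast
        then show ?thesis using split[of H2 e2 v] f2 by blast
      qed
      ultimately show ?thesis by (cases "v \<in> e1"; cases "v \<in> e2") simp_all
    qed
    moreover have "e1 \<in> H1" "e2 \<in> H2" using e1 e2 by auto
    then have "e1 \<subseteq> V" "e2 \<subseteq> V" using t1 t2 unfolding tf_def by auto
    ultimately have "e1 = e2" by (intro set_eqI) (meson subsetD)
    then show False using e1 e2 by auto
  qed
qed




lemma card2_other: assumes "card e = 2" "v \<in> e" shows "\<exists>u. u \<noteq> v \<and> e = {v, u}"
proof -
  obtain x y where xy: "e = {x, y}" "x \<noteq> y" using card_2_iff[THEN iffD1, OF assms(1)] by blast
  show ?thesis
  proof (cases "v = x")
    case True then show ?thesis using xy by (intro exI[of _ y]) auto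
  next
    case False then have "v = y" using xy assms(2) by blast
    then show ?thesis using xy by (intro exI[of _ x]) auto
  qed
qed

definition pth :: "'a set \<Rightarrow> 'a set set \<Rightarrow> 'a list \<Rightarrow> bool" where
  "pth V F xs \<longleftrightarrow> distinct xs \<and> set xs \<subseteq> V \<and> (\<forall>i. Suc i < length xs \<longrightarrow> {xs ! i, xs ! Suc i} \<in> F)"

lemma tf_ham:
  assumes fV: "finite V" and n3: "card V \<ge> 3" and t: "tf V F"
    and sub: "\<forall>S. S \<subset> V \<and> 2 \<le> card S \<longrightarrow> card {e\<in>F. e \<subseteq> S} < card S"
  shows "ham_cycle V F"
proof -
  have tE: "\<And>e. e \<in> F \<Longrightarrow> e \<subseteq> V \<and> card e = 2" and tD: "\<And>v. v \<in> V \<Longrightarrow> card {e\<in>F. v\<in>e} = 2"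
    using t unfolding tf_def by auto
  have fF: "finite F" using finite_edges[OF fV] tE by blast
  define P where "P = {xs. pth V F xs}"
  have Psub: "P \<subseteq> {xs. set xs \<subseteq> V \<and> length xs \<le> card V}"
  proof
    fix xs assume "xs \<in> P"
    then have "distinct xs" "set xs \<subseteq> V" unfolding P_def pth_def by auto
    moreover then have "card (set xs) \<le> card V" using fV card_mono by blast
    ultimately show "xs \<in> {xs. set xs \<subseteq> V \<and> length xs \<le> card V}" using distinct_card by fastforce
  qed
  have fP: "finite P" using finite_subset[OF Psub finite_lists_length_le[OF fV]] .
  have "V \<noteq> {}" using n3 by (intro notI) simp
  then obtain v where vV: "v \<in> V" by blast
  obtain e1 e2 where e12: "e1 \<in> F" "e2 \<in> F" "v \<in> e1" "v \<in> e2" "e1 \<noteq> e2"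
  proof -
    have "card {e\<in>F. v\<in>e} = 2" using tD vV by blast
    then obtain a b where ab: "{e\<in>F. v\<in>e} = {a, b}" "a \<noteq> b" by (meson card_2_iff)
    have "a \<in> {e\<in>F. v\<in>e}" "b \<in> {e\<in>F. v\<in>e}" using ab(1) by simp_all
    then show ?thesis using that[of a b] ab(2) by simp
  qed
  obtain a where a: "a \<noteq> v" "e1 = {v, a}" using card2_other[of e1 v] tE[of e1] e12 by blast
  obtain b where b: "b \<noteq> v" "e2 = {v, b}" using card2_other[of e2 v] tE[of e2] e12 by blast
  have "[a, v, b] \<in> P"
  proof -
    have "a \<noteq> b" using a b e12 by auto
    moreover have "a \<in> V" "b \<in> V" using tE e12 a b by auto
    moreover have "\<forall>i. Suc i < 3 \<longrightarrow> {[a, v, b] ! i, [a, v, b] ! Suc i} \<in> F"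
    proof (intro allI impI)
      fix i :: nat assume "Suc i < 3"
      then have "i = 0 \<or> i = 1" by auto
      then show "{[a, v, b] ! i, [a, v, b] ! Suc i} \<in> F" using e12 a b by (auto simp: insert_commute)
    qed
    ultimately show ?thesis unfolding P_def pth_def using a b vV by auto
  qed
  define m where "m = Max (length ` P)"
  have "m \<in> length ` P" unfolding m_def using fP \<open>[a, v, b] \<in> P\<close> by (intro Max_in) auto
  then obtain vs where vsP: "vs \<in> P" and lm: "length vs = m" by blast
  have mx: "length xs \<le> m" if "xs \<in> P" for xs unfolding m_def using fP that by simp
  have l3: "length vs \<ge> 3" using mx[OF \<open>[a, v, b] \<in> P\<close>] lm by simp
  have d: "distinct vs" and sV: "set vs \<subseteq> V" and pe: "\<And>i. Suc i < length vs \<Longrightarrow> {vs ! i, vs ! Suc i} \<in> F"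
    using vsP unfolding P_def pth_def by auto
  define n where "n = length vs"
  define k where "k = n - 1"
  have kn: "Suc k = n" "k \<ge> 2" using l3 n_def k_def by auto
  have inV: "vs ! i \<in> V" if "i < n" for i using that sV n_def nth_mem by blast
  have nteq: "vs ! i = vs ! j \<longleftrightarrow> i = j" if "i < n" "j < n" for i j
    using d that n_def nth_eq_iff_index_eq by metis
  have close: "{vs ! k, vs ! 0} \<in> F"
  proof -
    define f1 where "f1 = {vs ! (k - 1), vs ! k}"
    have f1F: "f1 \<in> F" using pe[of "k - 1"] kn n_def f1_def by simp
    have "card {e\<in>F. vs ! k \<in> e} = 2" using tD inV kn by simp
    then obtain x y where xy: "{e\<in>F. vs ! k \<in> e} = {x, y}" "x \<noteq> y" by (meson card_2_iff)
    have "f1 \<in> {e\<in>F. vs ! k \<in> e}" using f1F f1_def by simp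
    then have f1xy: "f1 \<in> {x, y}" by (simp only: xy(1))
    define f2 where "f2 = (if f1 = x then y else x)"
    have "f2 \<in> {x, y}" and f21: "f2 \<noteq> f1" using f1xy xy(2) f2_def by auto
    then have "f2 \<in> {e\<in>F. vs ! k \<in> e}" by (simp only: xy(1))
    then have f2: "f2 \<in> F" "vs ! k \<in> f2" "f2 \<noteq> f1" using f21 by blast+
    obtain u where u: "u \<noteq> vs ! k" "f2 = {vs ! k, u}" using card2_other[OF tE[OF f2(1), THEN conjunct2] f2(2)] by blast
    have uV: "u \<in> V" using tE[OF f2(1)] u by auto
    have "u \<in> set vs"
    proof (rule ccontr)
      assume nu: "u \<notin> set vs"
      have "pth V F (vs @ [u])" unfolding pth_def
      proof (intro conjI allI impI)
        show "distinct (vs @ [u])" using d nu by simp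
        show "set (vs @ [u]) \<subseteq> V" using sV uV by simp
        fix i assume i: "Suc i < length (vs @ [u])"
        show "{(vs @ [u]) ! i, (vs @ [u]) ! Suc i} \<in> F"
        proof (cases "Suc i < length vs")
          case True then show ?thesis using pe by (simp add: nth_append)
        next
          case False
          then have "i = k" using i kn n_def by simp
          then show ?thesis using f2 u kn n_def by (simp add: nth_append)
        qed
      qed
      then have "vs @ [u] \<in> P" unfolding P_def by simp
      then show False using mx lm by fastforce
    qed
    then obtain j where j: "j < n" "u = vs ! j" using n_def by (auto simp: in_set_conv_nth)
    have jk: "j \<noteq> k" using u j by blast
    have jk1: "j \<noteq> k - 1"
    proof
      assume "j = k - 1"
      then have "f2 = f1" using u j f1_def by (auto simp: insert_commute)
      then show False using f2 by simp
    qed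
    have "j = 0"
    proof (rule ccontr)
      assume j0: "j \<noteq> 0"
      have jlt: "Suc j < k" using j jk jk1 kn by auto
      define a1 where "a1 = {vs ! (j - 1), vs ! j}"
      define a2 where "a2 = {vs ! j, vs ! Suc j}"
      have a1F: "a1 \<in> F" using pe[of "j - 1"] j j0 kn a1_def n_def by simp
      have a2F: "a2 \<in> F" using pe[of j] jlt kn a2_def n_def by simp
      have ne1: "vs ! (j - 1) \<noteq> vs ! Suc j" using nteq[of "j - 1" "Suc j"] j jlt kn j0 by simp
      have ne2: "vs ! (j - 1) \<noteq> vs ! k" using nteq[of "j - 1" k] j jlt kn j0 by simp
      have ne3: "vs ! Suc j \<noteq> vs ! k" using nteq[of "Suc j" k] j jlt kn by simp
      have ne4: "vs ! (j - 1) \<noteq> vs ! j" using nteq[of "j - 1" j] j j0 by simp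
      have ne5: "vs ! Suc j \<noteq> vs ! j" using nteq[of "Suc j" j] jlt kn by simp
      have ne6: "vs ! k \<noteq> vs ! j" using nteq[of k j] j jk kn by simp
      have "a1 \<noteq> a2" "a1 \<noteq> f2" "a2 \<noteq> f2" using ne1 ne2 ne3 ne4 ne5 ne6 u j a1_def a2_def
        by (auto simp: doubleton_eq_iff)
      then have "card {a1, a2, f2} = 3" by simp
      moreover have "{a1, a2, f2} \<subseteq> {e\<in>F. vs ! j \<in> e}" using a1F a2F f2 u j a1_def a2_def by auto
      moreover have "finite {e\<in>F. vs ! j \<in> e}" using fF by simp
      ultimately have "3 \<le> card {e\<in>F. vs ! j \<in> e}" by (metis card_mono)
      moreover have "card {e\<in>F. vs ! j \<in> e} = 2" using tD inV j by simp
      ultimately show False by simp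
    qed
    then show ?thesis using f2 u j by simp
  qed
  define S where "S = set vs"
  define H' where "H' = {{vs ! i, vs ! (Suc i mod length vs)} | i. i < length vs}"
  have hS: "ham_cycle S H'" unfolding ham_cycle_def S_def H'_def using d by blast
  have cS: "card S = n" using d S_def n_def distinct_card by metis
  have fS: "finite S" using S_def by simp
  have tS: "tf S H'" using ham_tf[OF hS] cS l3 n_def by simp
  have cH: "card H' = card S" using tf_card[OF fS tS] .
  have HF: "H' \<subseteq> F"
  proof
    fix e assume "e \<in> H'"
    then obtain i where i: "i < n" "e = {vs ! i, vs ! (Suc i mod n)}" using H'_def n_def by auto
    show "e \<in> F"
    proof (cases "Suc i < n")
      case True then show ?thesis using i pe n_def by simp
    next
      case False then have ik: "i = k" using i kn by simp
      then have "Suc i mod n = 0" using kn by simp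
      then show ?thesis using i close ik by simp
    qed
  qed
  have loc: "e \<in> H'" if "e \<in> F" "w \<in> e" "w \<in> S" for e w
  proof -
    have sb: "{e\<in>H'. w \<in> e} \<subseteq> {e\<in>F. w \<in> e}" using HF by blast
    have c1: "card {e\<in>H'. w \<in> e} = 2" using tS that(3) unfolding tf_def by blast
    have wV: "w \<in> V" using that(3) sV S_def by blast
    have c2: "card {e\<in>F. w \<in> e} = 2" using tD[OF wV] .
    have ff: "finite {e\<in>F. w \<in> e}" using fF by simp
    have "{e\<in>H'. w \<in> e} = {e\<in>F. w \<in> e}" using card_subset_eq[OF ff sb] c1 c2 by simp
    moreover have "e \<in> {e\<in>F. w \<in> e}" using that(1,2) by simp
    ultimately show ?thesis by blast
  qed
  have SV: "S = V"
  proof (rule ccontr)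
    assume "S \<noteq> V"
    then have "S \<subset> V" using sV S_def by auto
    moreover have "2 \<le> card S" using cS l3 n_def by simp
    ultimately have lt: "card {e\<in>F. e \<subseteq> S} < card S" using sub by blast
    have "\<forall>e\<in>H'. e \<subseteq> S" using tS unfolding tf_def by blast
    then have "H' \<subseteq> {e\<in>F. e \<subseteq> S}" using HF by blast
    moreover have "finite {e\<in>F. e \<subseteq> S}" using fF by simp
    ultimately have "card H' \<le> card {e\<in>F. e \<subseteq> S}" by (rule card_mono[rotated])
    then show False using lt cH by simp
  qed
  have "F = H'"
  proof
    show "F \<subseteq> H'"
    proof
      fix e assume eF: "e \<in> F"
      then have ce: "card e = 2" "e \<subseteq> V" using tE by blast+
      then have "e \<noteq> {}" by (intro notI) simp
      then obtain w where we: "w \<in> e" by blast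
      have "w \<in> S" using we ce(2) SV by blast
      then show "e \<in> H'" using loc[OF eF we] by blast
    qed
  qed (rule HF)
  then have "distinct vs \<and> set vs = V \<and> F = {{vs ! i, vs ! (Suc i mod length vs)} | i. i < length vs}"
    using d SV S_def H'_def by simp
  then show ?thesis unfolding ham_cycle_def by blast
qed




lemma sumX:
  assumes "finite A" "\<forall>e\<in>A. X e \<in> {0, 1::real}"
  shows "sum X A = real (card {e\<in>A. X e = 1})"
proof -
  have "sum X A = (\<Sum>e\<in>A. if X e = 1 then 1 else 0)"
    using assms(2) by (intro sum.cong refl) auto
  also have "\<dots> = (\<Sum>e\<in>{e\<in>A. X e = 1}. 1)"
    using assms(1) by (rule sum.inter_filter[symmetric])
  finally show ?thesis by simp
qed

lemma partX:
  assumes "finite A" "\<forall>e\<in>A. X e \<in> {0, 1::real}"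
  shows "card A = card {e\<in>A. X e = 1} + card {e\<in>A. X e = 0}"
proof -
  have "A = {e\<in>A. X e = 1} \<union> {e\<in>A. X e = 0}" using assms(2) by auto
  moreover have "{e\<in>A. X e = 1} \<inter> {e\<in>A. X e = 0} = {}" by auto
  moreover have "finite {e\<in>A. X e = 1}" "finite {e\<in>A. X e = 0}" using assms(1) by simp_all
  ultimately show ?thesis using card_Un_disjoint[of "{e\<in>A. X e = 1}" "{e\<in>A. X e = 0}"] by simp
qed

lemma inj_card:
  assumes "inj_on fst Y"
  shows "card {e\<in>Y. P (fst e)} = card {f\<in>fst ` Y. P f}"
proof -
  have "fst ` {e\<in>Y. P (fst e)} = {f\<in>fst ` Y. P f}" by auto
  moreover have "inj_on fst {e\<in>Y. P (fst e)}" using assms by (rule inj_on_subset) auto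
  ultimately show ?thesis using card_image by metis
qed

lemma memE: "(f, b) \<in> union_copies Exs Eys \<longleftrightarrow> (b \<and> f \<in> Exs) \<or> (\<not> b \<and> f \<in> Eys)"
  unfolding union_copies_def by auto

lemma copies_ham:
  assumes fV: "finite V" and n3: "card V \<ge> 3" and tx: "tf V Exs" and ty: "tf V Eys"
    and Y: "Y \<subseteq> union_copies Exs Eys"
    and deg: "\<forall>v\<in>V. card {e\<in>Y. v \<in> fst e} = 2"
    and sub: "\<forall>S. S \<subset> V \<and> 2 \<le> card S \<longrightarrow> card {e\<in>Y. fst e \<subseteq> S} < card S"
  shows "ham_copies V Y"
proof -
  have edge: "fst y \<subseteq> V \<and> card (fst y) = 2" if "y \<in> Y" for y
  proof -
    obtain f b where fb: "y = (f, b)" by (cases y)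
    then have "(b \<and> f \<in> Exs) \<or> (\<not> b \<and> f \<in> Eys)" using Y that memE by blast
    then show ?thesis using tx ty fb unfolding tf_def by auto
  qed
  have fY: "finite Y"
  proof -
    have "finite (union_copies Exs Eys)"
      using finite_edges[OF fV, of Exs] finite_edges[OF fV, of Eys] tx ty
      unfolding tf_def union_copies_def by blast
    then show ?thesis using Y finite_subset by blast
  qed
  have inj: "inj_on fst Y"
  proof
    fix a b assume ab: "a \<in> Y" "b \<in> Y" "fst a = fst b"
    show "a = b"
    proof (rule ccontr)
      assume ne: "a \<noteq> b"
      define S where "S = fst a"
      have S2: "card S = 2" "S \<subseteq> V" using edge[OF ab(1)] S_def by auto
      have "S \<noteq> V" using S2 n3 by (intro notI) simp
      then have "S \<subset> V \<and> 2 \<le> card S" using S2 by (simp add: psubset_eq)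
      then have "card {e\<in>Y. fst e \<subseteq> S} < card S" using sub by blast
      then have "card {e\<in>Y. fst e \<subseteq> S} < 2" using S2 by simp
      moreover have "{a, b} \<subseteq> {e\<in>Y. fst e \<subseteq> S}" using ab S_def by auto
      moreover have "finite {e\<in>Y. fst e \<subseteq> S}" using fY by simp
      ultimately have "card {a, b} < 2" using card_mono[of "{e\<in>Y. fst e \<subseteq> S}" "{a, b}"] by linarith
      then show False using ne by simp
    qed
  qed
  have "tf V (fst ` Y)"
    unfolding tf_def
  proof (intro conjI ballI)
    fix f assume "f \<in> fst ` Y"
    then show "f \<subseteq> V" "card f = 2" using edge by auto
  next
    fix v assume "v \<in> V"
    then have "card {e\<in>Y. v \<in> fst e} = 2" using deg by blast
    then show "card {e \<in> fst ` Y. v \<in> e} = 2" using inj_card[OF inj, of "\<lambda>f. v \<in> f"] by simp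
  qed
  moreover have "\<forall>S. S \<subset> V \<and> 2 \<le> card S \<longrightarrow> card {e\<in>fst ` Y. e \<subseteq> S} < card S"
  proof (intro allI impI)
    fix S assume "S \<subset> V \<and> 2 \<le> card S"
    then have "card {e\<in>Y. fst e \<subseteq> S} < card S" using sub by blast
    then show "card {e\<in>fst ` Y. e \<subseteq> S} < card S" using inj_card[OF inj, of "\<lambda>f. f \<subseteq> S"] by simp
  qed
  ultimately have "ham_cycle V (fst ` Y)" using tf_ham[OF fV n3] by blast
  then show ?thesis unfolding ham_copies_def using inj by blast
qed




theorem mainTheorem1:
  fixes V :: "'a set" and Exs Eys :: "'a set set" and X :: "'a set \<times> bool \<Rightarrow> real"
  assumes finV: "finite V" and n3: "card V \<ge> 3"
    and hx: "ham_cycle V Exs" and hy: "ham_cycle V Eys"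
    and bin: "\<forall>e \<in> union_copies Exs Eys. X e \<in> {0, 1}"
  shows "( (\<Sum>e \<in> union_copies Exs Eys. X e) = real (card V)
        \<and> (\<forall>v \<in> V. (\<Sum>e \<in> {e \<in> union_copies Exs Eys. v \<in> fst e}. X e) = 2)
        \<and> (\<Sum>e \<in> (\<lambda>e. (e, True)) ` (Exs - Eys). X e)
             \<le> real (card V) - real (card (Exs \<inter> Eys)) - 2
        \<and> (\<Sum>e \<in> (\<lambda>e. (e, False)) ` (Eys - Exs). X e)
             \<le> real (card V) - real (card (Exs \<inter> Eys)) - 2
        \<and> (\<forall>S. S \<subset> V \<and> card S \<ge> 2 \<longrightarrow>
             (\<Sum>e \<in> {e \<in> union_copies Exs Eys. fst e \<subseteq> S}. X e) \<le> real (card S) - 1)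
        \<and> (\<forall>S. S \<subset> V \<and> card S \<ge> 2 \<longrightarrow>
             (\<Sum>e \<in> {e \<in> union_copies Exs Eys. fst e \<subseteq> S}. X e)
               \<ge> real (card {e \<in> union_copies Exs Eys. fst e \<subseteq> S}) - real (card S) + 1))
     \<longleftrightarrow>
     (ham_copies V {e \<in> union_copies Exs Eys. X e = 1}
      \<and> ham_copies V {e \<in> union_copies Exs Eys. X e = 0}
      \<and> fst ` {e \<in> union_copies Exs Eys. X e = 1} \<noteq> Exs
      \<and> fst ` {e \<in> union_copies Exs Eys. X e = 1} \<noteq> Eys)"
proof -
  define E where "E = union_copies Exs Eys"
  define Z where "Z = {e \<in> E. X e = 1}"
  define W where "W = {e \<in> E. X e = 0}"
  have tx: "tf V Exs" using ham_tf hx n3 by blast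
  have ty: "tf V Eys" using ham_tf hy n3 by blast
  have cx: "card Exs = card V" using tf_card[OF finV tx] .
  have cy: "card Eys = card V" using tf_card[OF finV ty] .
  have fEx: "finite Exs" using finite_edges[OF finV, of Exs] tx unfolding tf_def by blast
  have fEy: "finite Eys" using finite_edges[OF finV, of Eys] ty unfolding tf_def by blast
  have fE: "finite E" unfolding E_def union_copies_def using fEx fEy by simp
  have binE: "\<forall>e\<in>E. X e \<in> {0, 1}" using bin E_def by simp
  have memE': "(f, b) \<in> E \<longleftrightarrow> (b \<and> f \<in> Exs) \<or> (\<not> b \<and> f \<in> Eys)" for f b
    unfolding E_def by (rule memE)
  have sumE: "sum X A = real (card {e\<in>A. X e = 1})" if "A \<subseteq> E" for A
  proof -
    have "finite A" using that fE finite_subset by blast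
    moreover have "\<forall>e\<in>A. X e \<in> {0, 1}" using that binE by blast
    ultimately show ?thesis by (rule sumX)
  qed
  have partE: "card A = card {e\<in>A. X e = 1} + card {e\<in>A. X e = 0}" if "A \<subseteq> E" for A
  proof -
    have "finite A" using that fE finite_subset by blast
    moreover have "\<forall>e\<in>A. X e \<in> {0, 1}" using that binE by blast
    ultimately show ?thesis by (rule partX)
  qed
  have ZU: "Z \<subseteq> union_copies Exs Eys" "W \<subseteq> union_copies Exs Eys" unfolding Z_def W_def E_def by auto
  have degE: "card {e\<in>E. v \<in> fst e} = 4" if vV: "v \<in> V" for v
  proof -
    have eq: "{e\<in>E. v \<in> fst e} = (\<lambda>e. (e, True)) ` {e\<in>Exs. v \<in> e} \<union> (\<lambda>e. (e, False)) ` {e\<in>Eys. v \<in> e}"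
      unfolding E_def union_copies_def by force
    have dj: "(\<lambda>e. (e, True)) ` {e\<in>Exs. v \<in> e} \<inter> (\<lambda>e. (e, False)) ` {e\<in>Eys. v \<in> e} = {}" by auto
    have c1: "card ((\<lambda>e. (e, True)) ` {e\<in>Exs. v \<in> e}) = 2"
      proof -
      have "card {e\<in>Exs. v \<in> e} = 2" using tx vV unfolding tf_def by blast
      moreover have "inj_on (\<lambda>e. (e, True)) {e\<in>Exs. v \<in> e}" by (simp add: inj_on_def)
      ultimately show ?thesis by (simp add: card_image)
    qed
    have c2: "card ((\<lambda>e. (e, False)) ` {e\<in>Eys. v \<in> e}) = 2"
      proof -
      have "card {e\<in>Eys. v \<in> e} = 2" using ty vV unfolding tf_def by blast
      moreover have "inj_on (\<lambda>e. (e, False)) {e\<in>Eys. v \<in> e}" by (simp add: inj_on_def)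
      ultimately show ?thesis by (simp add: card_image)
    qed
    have "finite ((\<lambda>e. (e, True)) ` {e\<in>Exs. v \<in> e})" "finite ((\<lambda>e. (e, False)) ` {e\<in>Eys. v \<in> e})"
      using fEx fEy by simp_all
    then have "card ((\<lambda>e. (e, True)) ` {e\<in>Exs. v \<in> e} \<union> (\<lambda>e. (e, False)) ` {e\<in>Eys. v \<in> e}) = 2 + 2"
      using card_Un_disjoint[OF _ _ dj] c1 c2 by simp
    then show ?thesis unfolding eq by simp
  qed
  have fwd: "ham_copies V Z \<and> ham_copies V W \<and> fst ` Z \<noteq> Exs \<and> fst ` Z \<noteq> Eys"
    if L: "(\<Sum>e \<in> E. X e) = real (card V)
        \<and> (\<forall>v \<in> V. (\<Sum>e \<in> {e \<in> E. v \<in> fst e}. X e) = 2)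
        \<and> (\<Sum>e \<in> (\<lambda>e. (e, True)) ` (Exs - Eys). X e)
             \<le> real (card V) - real (card (Exs \<inter> Eys)) - 2
        \<and> (\<Sum>e \<in> (\<lambda>e. (e, False)) ` (Eys - Exs). X e)
             \<le> real (card V) - real (card (Exs \<inter> Eys)) - 2
        \<and> (\<forall>S. S \<subset> V \<and> card S \<ge> 2 \<longrightarrow>
             (\<Sum>e \<in> {e \<in> E. fst e \<subseteq> S}. X e) \<le> real (card S) - 1)
        \<and> (\<forall>S. S \<subset> V \<and> card S \<ge> 2 \<longrightarrow>
             (\<Sum>e \<in> {e \<in> E. fst e \<subseteq> S}. X e)
               \<ge> real (card {e \<in> E. fst e \<subseteq> S}) - real (card S) + 1)"
  proof -
    have A2: "\<forall>v \<in> V. (\<Sum>e \<in> {e \<in> E. v \<in> fst e}. X e) = 2" using L by blast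
    have A3: "(\<Sum>e \<in> (\<lambda>e. (e, True)) ` (Exs - Eys). X e) \<le> real (card V) - real (card (Exs \<inter> Eys)) - 2"
      using L by blast
    have A4: "(\<Sum>e \<in> (\<lambda>e. (e, False)) ` (Eys - Exs). X e) \<le> real (card V) - real (card (Exs \<inter> Eys)) - 2"
      using L by blast
    have A5: "\<forall>S. S \<subset> V \<and> card S \<ge> 2 \<longrightarrow> (\<Sum>e \<in> {e \<in> E. fst e \<subseteq> S}. X e) \<le> real (card S) - 1"
      using L by blast
    have A6: "\<forall>S. S \<subset> V \<and> card S \<ge> 2 \<longrightarrow> (\<Sum>e \<in> {e \<in> E. fst e \<subseteq> S}. X e)
               \<ge> real (card {e \<in> E. fst e \<subseteq> S}) - real (card S) + 1"
      using L by blast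
    have degZ: "\<forall>v\<in>V. card {e\<in>Z. v \<in> fst e} = 2"
    proof
      fix v assume vV: "v \<in> V"
      have "(\<Sum>e \<in> {e \<in> E. v \<in> fst e}. X e) = real (card {e\<in>{e \<in> E. v \<in> fst e}. X e = 1})"
        by (rule sumE) auto
      also have "{e\<in>{e \<in> E. v \<in> fst e}. X e = 1} = {e\<in>Z. v \<in> fst e}" unfolding Z_def by auto
      finally show "card {e\<in>Z. v \<in> fst e} = 2" using A2 vV by simp
    qed
    have degW: "\<forall>v\<in>V. card {e\<in>W. v \<in> fst e} = 2"
    proof
      fix v assume vV: "v \<in> V"
      have "card {e \<in> E. v \<in> fst e} = card {e\<in>{e \<in> E. v \<in> fst e}. X e = 1} + card {e\<in>{e \<in> E. v \<in> fst e}. X e = 0}"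
        by (rule partE) auto
      also have "{e\<in>{e \<in> E. v \<in> fst e}. X e = 1} = {e\<in>Z. v \<in> fst e}" unfolding Z_def by auto
      also have "{e\<in>{e \<in> E. v \<in> fst e}. X e = 0} = {e\<in>W. v \<in> fst e}" unfolding W_def by auto
      finally show "card {e\<in>W. v \<in> fst e} = 2" using degE[OF vV] degZ vV by simp
    qed
    have cntZ: "sum X {e \<in> E. fst e \<subseteq> S} = real (card {e\<in>Z. fst e \<subseteq> S})" for S
    proof -
      have "sum X {e \<in> E. fst e \<subseteq> S} = real (card {e\<in>{e \<in> E. fst e \<subseteq> S}. X e = 1})"
        by (rule sumE) auto
      also have "{e\<in>{e \<in> E. fst e \<subseteq> S}. X e = 1} = {e\<in>Z. fst e \<subseteq> S}" unfolding Z_def by auto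
      finally show ?thesis .
    qed
    have cntES: "card {e \<in> E. fst e \<subseteq> S} = card {e\<in>Z. fst e \<subseteq> S} + card {e\<in>W. fst e \<subseteq> S}" for S
    proof -
      have "card {e \<in> E. fst e \<subseteq> S} = card {e\<in>{e \<in> E. fst e \<subseteq> S}. X e = 1} + card {e\<in>{e \<in> E. fst e \<subseteq> S}. X e = 0}"
        by (rule partE) auto
      also have "{e\<in>{e \<in> E. fst e \<subseteq> S}. X e = 1} = {e\<in>Z. fst e \<subseteq> S}" unfolding Z_def by auto
      also have "{e\<in>{e \<in> E. fst e \<subseteq> S}. X e = 0} = {e\<in>W. fst e \<subseteq> S}" unfolding W_def by auto
      finally show ?thesis .
    qed
    have subZ: "\<forall>S. S \<subset> V \<and> 2 \<le> card S \<longrightarrow> card {e\<in>Z. fst e \<subseteq> S} < card S"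
    proof (intro allI impI)
      fix S assume S: "S \<subset> V \<and> 2 \<le> card S"
      then have "(\<Sum>e \<in> {e \<in> E. fst e \<subseteq> S}. X e) \<le> real (card S) - 1" using A5 by blast
      then have "real (card {e\<in>Z. fst e \<subseteq> S}) \<le> real (card S) - 1" using cntZ[of S] by simp
      then show "card {e\<in>Z. fst e \<subseteq> S} < card S" by linarith
    qed
    have subW: "\<forall>S. S \<subset> V \<and> 2 \<le> card S \<longrightarrow> card {e\<in>W. fst e \<subseteq> S} < card S"
    proof (intro allI impI)
      fix S assume S: "S \<subset> V \<and> 2 \<le> card S"
      then have "(\<Sum>e \<in> {e \<in> E. fst e \<subseteq> S}. X e) \<ge> real (card {e \<in> E. fst e \<subseteq> S}) - real (card S) + 1"
        using A6 by blast
      then have "real (card {e\<in>Z. fst e \<subseteq> S}) \<ge> real (card {e \<in> E. fst e \<subseteq> S}) - real (card S) + 1"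
        using cntZ[of S] by simp
      then have "real (card {e\<in>Z. fst e \<subseteq> S}) \<ge> real (card {e\<in>Z. fst e \<subseteq> S}) + real (card {e\<in>W. fst e \<subseteq> S}) - real (card S) + 1"
        using cntES[of S] by simp
      then show "card {e\<in>W. fst e \<subseteq> S} < card S" by linarith
    qed
    have hz: "ham_copies V Z" using copies_ham[OF finV n3 tx ty ZU(1) degZ subZ] .
    have hw: "ham_copies V W" using copies_ham[OF finV n3 tx ty ZU(2) degW subW] .
    have cd: "card (Exs - Eys) + card (Exs \<inter> Eys) = card V" "card (Eys - Exs) + card (Exs \<inter> Eys) = card V"
    proof -
      have "card (Exs - Eys) = card Exs - card (Exs \<inter> Eys)" using fEx by (intro card_Diff_subset_Int) simp
      moreover have "card (Exs \<inter> Eys) \<le> card Exs" using fEx by (intro card_mono) auto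
      ultimately show "card (Exs - Eys) + card (Exs \<inter> Eys) = card V" using cx by simp
      have "card (Eys - Exs) = card Eys - card (Eys \<inter> Exs)" using fEy by (intro card_Diff_subset_Int) simp
      moreover have "card (Eys \<inter> Exs) \<le> card Eys" using fEy by (intro card_mono) auto
      ultimately show "card (Eys - Exs) + card (Exs \<inter> Eys) = card V" using cy by (simp add: Int_commute)
    qed
    have n1: "fst ` Z \<noteq> Exs"
    proof
      assume eq: "fst ` Z = Exs"
      have sb: "(\<lambda>e. (e, True)) ` (Exs - Eys) \<subseteq> Z"
      proof
        fix x assume "x \<in> (\<lambda>e. (e, True)) ` (Exs - Eys)"
        then obtain e where e: "x = (e, True)" "e \<in> Exs" "e \<notin> Eys" by blast
        then obtain y where y: "y \<in> Z" "fst y = e" using eq by (metis imageE)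
        obtain f b where fb: "y = (f, b)" by (cases y)
        have "y \<in> E" using y Z_def by simp
        then have "b" using fb y e memE' by auto
        then show "x \<in> Z" using fb y e by simp
      qed
      have "(\<Sum>e \<in> (\<lambda>e. (e, True)) ` (Exs - Eys). X e) = real (card {e\<in>(\<lambda>e. (e, True)) ` (Exs - Eys). X e = 1})"
        by (rule sumE) (auto simp: E_def union_copies_def)
      also have "{e\<in>(\<lambda>e. (e, True)) ` (Exs - Eys). X e = 1} = (\<lambda>e. (e, True)) ` (Exs - Eys)"
        using sb Z_def by auto
      also have "card ((\<lambda>e. (e, True)) ` (Exs - Eys)) = card (Exs - Eys)"
        by (rule card_image) (auto simp: inj_on_def)
      finally show False using A3 cd by simp
    qed
    have n2: "fst ` Z \<noteq> Eys"
    proof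
      assume eq: "fst ` Z = Eys"
      have sb: "(\<lambda>e. (e, False)) ` (Eys - Exs) \<subseteq> Z"
      proof
        fix x assume "x \<in> (\<lambda>e. (e, False)) ` (Eys - Exs)"
        then obtain e where e: "x = (e, False)" "e \<in> Eys" "e \<notin> Exs" by blast
        then obtain y where y: "y \<in> Z" "fst y = e" using eq by (metis imageE)
        obtain f b where fb: "y = (f, b)" by (cases y)
        have "y \<in> E" using y Z_def by simp
        then have "\<not> b" using fb y e memE' by auto
        then show "x \<in> Z" using fb y e by simp
      qed
      have "(\<Sum>e \<in> (\<lambda>e. (e, False)) ` (Eys - Exs). X e) = real (card {e\<in>(\<lambda>e. (e, False)) ` (Eys - Exs). X e = 1})"
        by (rule sumE) (auto simp: E_def union_copies_def)
      also have "{e\<in>(\<lambda>e. (e, False)) ` (Eys - Exs). X e = 1} = (\<lambda>e. (e, False)) ` (Eys - Exs)"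
        using sb Z_def by auto
      also have "card ((\<lambda>e. (e, False)) ` (Eys - Exs)) = card (Eys - Exs)"
        by (rule card_image) (auto simp: inj_on_def)
      finally show False using A4 cd by simp
    qed
    show ?thesis using hz hw n1 n2 by blast
  qed
  have bwd: "(\<Sum>e \<in> E. X e) = real (card V)
        \<and> (\<forall>v \<in> V. (\<Sum>e \<in> {e \<in> E. v \<in> fst e}. X e) = 2)
        \<and> (\<Sum>e \<in> (\<lambda>e. (e, True)) ` (Exs - Eys). X e)
             \<le> real (card V) - real (card (Exs \<inter> Eys)) - 2
        \<and> (\<Sum>e \<in> (\<lambda>e. (e, False)) ` (Eys - Exs). X e)
             \<le> real (card V) - real (card (Exs \<inter> Eys)) - 2
        \<and> (\<forall>S. S \<subset> V \<and> card S \<ge> 2 \<longrightarrow>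
             (\<Sum>e \<in> {e \<in> E. fst e \<subseteq> S}. X e) \<le> real (card S) - 1)
        \<and> (\<forall>S. S \<subset> V \<and> card S \<ge> 2 \<longrightarrow>
             (\<Sum>e \<in> {e \<in> E. fst e \<subseteq> S}. X e)
               \<ge> real (card {e \<in> E. fst e \<subseteq> S}) - real (card S) + 1)"
    if R: "ham_copies V Z \<and> ham_copies V W \<and> fst ` Z \<noteq> Exs \<and> fst ` Z \<noteq> Eys"
  proof -
    have injZ: "inj_on fst Z" and hZ: "ham_cycle V (fst ` Z)" using R unfolding ham_copies_def by auto
    have injW: "inj_on fst W" and hW: "ham_cycle V (fst ` W)" using R unfolding ham_copies_def by auto
    have nz1: "fst ` Z \<noteq> Exs" and nz2: "fst ` Z \<noteq> Eys" using R by auto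
    have tZ: "tf V (fst ` Z)" using ham_tf[OF hZ n3] .
    have tW: "tf V (fst ` W)" using ham_tf[OF hW n3] .
    have cZ: "card Z = card V" using tf_card[OF finV tZ] card_image[OF injZ] by simp
    have B1: "(\<Sum>e \<in> E. X e) = real (card V)"
    proof -
      have "(\<Sum>e \<in> E. X e) = real (card {e\<in>E. X e = 1})" by (rule sumE) simp
      then show ?thesis using cZ Z_def by simp
    qed
    have B2: "\<forall>v \<in> V. (\<Sum>e \<in> {e \<in> E. v \<in> fst e}. X e) = 2"
    proof
      fix v assume vV: "v \<in> V"
      have "(\<Sum>e \<in> {e \<in> E. v \<in> fst e}. X e) = real (card {e\<in>{e \<in> E. v \<in> fst e}. X e = 1})"
        by (rule sumE) auto
      also have "{e\<in>{e \<in> E. v \<in> fst e}. X e = 1} = {e\<in>Z. v \<in> fst e}" unfolding Z_def by auto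
      also have "card {e\<in>Z. v \<in> fst e} = card {f\<in>fst ` Z. v \<in> f}" by (rule inj_card[OF injZ])
      also have "card {f\<in>fst ` Z. v \<in> f} = 2" using tZ vV unfolding tf_def by blast
      finally show "(\<Sum>e \<in> {e \<in> E. v \<in> fst e}. X e) = 2" by simp
    qed
    have CZ: "Exs \<inter> Eys \<subseteq> fst ` Z"
    proof
      fix e assume e: "e \<in> Exs \<inter> Eys"
      have inE: "(e, True) \<in> E" "(e, False) \<in> E" using e memE' by auto
      show "e \<in> fst ` Z"
      proof (rule ccontr)
        assume nz: "e \<notin> fst ` Z"
        have "(e, True) \<notin> Z" "(e, False) \<notin> Z" using nz by (metis fst_conv image_eqI)+
        then have "X (e, True) \<noteq> 1" "X (e, False) \<noteq> 1" using inE Z_def by auto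
        then have "X (e, True) = 0" "X (e, False) = 0" using inE binE by auto
        then have "(e, True) \<in> W" "(e, False) \<in> W" using inE W_def by auto
        then have "(e, True) = (e, False)" using injW unfolding inj_on_def by (metis fst_conv)
        then show False by simp
      qed
    qed
    have fFZ: "finite (fst ` Z)" using finite_edges[OF finV, of "fst ` Z"] tZ unfolding tf_def by blast
    have B3: "(\<Sum>e \<in> (\<lambda>e. (e, True)) ` (Exs - Eys). X e) \<le> real (card V) - real (card (Exs \<inter> Eys)) - 2"
    proof -
      define K where "K = {e\<in>Exs - Eys. (e, True) \<in> Z}"
      have "(\<Sum>e \<in> (\<lambda>e. (e, True)) ` (Exs - Eys). X e) = real (card {x\<in>(\<lambda>e. (e, True)) ` (Exs - Eys). X x = 1})"
        by (rule sumE) (auto simp: memE')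
      also have "{x\<in>(\<lambda>e. (e, True)) ` (Exs - Eys). X x = 1} = (\<lambda>e. (e, True)) ` K"
        unfolding K_def Z_def by (auto simp: memE')
      also have "card ((\<lambda>e. (e, True)) ` K) = card K" by (rule card_image) (auto simp: inj_on_def)
      finally have s: "(\<Sum>e \<in> (\<lambda>e. (e, True)) ` (Exs - Eys). X e) = real (card K)" .
      have "K \<union> (Exs \<inter> Eys) \<subseteq> fst ` Z \<inter> Exs" unfolding K_def using CZ by (force intro: image_eqI[of _ fst])
      then have "card (K \<union> (Exs \<inter> Eys)) \<le> card (fst ` Z \<inter> Exs)" using fFZ by (intro card_mono) auto
      moreover have "card (K \<union> (Exs \<inter> Eys)) = card K + card (Exs \<inter> Eys)"
        using fEx unfolding K_def by (intro card_Un_disjoint) auto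
      moreover have "card (fst ` Z \<inter> Exs) + 2 \<le> card V" using tf_inter[OF finV tZ tx nz1] .
      ultimately have "card K + card (Exs \<inter> Eys) + 2 \<le> card V" by linarith
      then have "real (card K) + real (card (Exs \<inter> Eys)) + 2 \<le> real (card V)" by linarith
      then show ?thesis using s by linarith
    qed
    have B4: "(\<Sum>e \<in> (\<lambda>e. (e, False)) ` (Eys - Exs). X e) \<le> real (card V) - real (card (Exs \<inter> Eys)) - 2"
    proof -
      define K where "K = {e\<in>Eys - Exs. (e, False) \<in> Z}"
      have "(\<Sum>e \<in> (\<lambda>e. (e, False)) ` (Eys - Exs). X e) = real (card {x\<in>(\<lambda>e. (e, False)) ` (Eys - Exs). X x = 1})"
        by (rule sumE) (auto simp: memE')
      also have "{x\<in>(\<lambda>e. (e, False)) ` (Eys - Exs). X x = 1} = (\<lambda>e. (e, False)) ` K"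
        unfolding K_def Z_def by (auto simp: memE')
      also have "card ((\<lambda>e. (e, False)) ` K) = card K" by (rule card_image) (auto simp: inj_on_def)
      finally have s: "(\<Sum>e \<in> (\<lambda>e. (e, False)) ` (Eys - Exs). X e) = real (card K)" .
      have "K \<union> (Exs \<inter> Eys) \<subseteq> fst ` Z \<inter> Eys" unfolding K_def using CZ by (force intro: image_eqI[of _ fst])
      then have "card (K \<union> (Exs \<inter> Eys)) \<le> card (fst ` Z \<inter> Eys)" using fFZ by (intro card_mono) auto
      moreover have "card (K \<union> (Exs \<inter> Eys)) = card K + card (Exs \<inter> Eys)"
        using fEy fEx unfolding K_def by (intro card_Un_disjoint) auto
      moreover have "card (fst ` Z \<inter> Eys) + 2 \<le> card V" using tf_inter[OF finV tZ ty nz2] .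
      ultimately have "card K + card (Exs \<inter> Eys) + 2 \<le> card V" by linarith
      then have "real (card K) + real (card (Exs \<inter> Eys)) + 2 \<le> real (card V)" by linarith
      then show ?thesis using s by linarith
    qed
    have cntZ: "sum X {e \<in> E. fst e \<subseteq> S} = real (card {f\<in>fst ` Z. f \<subseteq> S})" for S
    proof -
      have "sum X {e \<in> E. fst e \<subseteq> S} = real (card {e\<in>{e \<in> E. fst e \<subseteq> S}. X e = 1})"
        by (rule sumE) auto
      also have "{e\<in>{e \<in> E. fst e \<subseteq> S}. X e = 1} = {e\<in>Z. fst e \<subseteq> S}" unfolding Z_def by auto
      also have "card {e\<in>Z. fst e \<subseteq> S} = card {f\<in>fst ` Z. f \<subseteq> S}" by (rule inj_card[OF injZ])
      finally show ?thesis .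
    qed
    have cntES: "card {e \<in> E. fst e \<subseteq> S} = card {f\<in>fst ` Z. f \<subseteq> S} + card {f\<in>fst ` W. f \<subseteq> S}" for S
    proof -
      have "card {e \<in> E. fst e \<subseteq> S} = card {e\<in>{e \<in> E. fst e \<subseteq> S}. X e = 1} + card {e\<in>{e \<in> E. fst e \<subseteq> S}. X e = 0}"
        by (rule partE) auto
      also have "{e\<in>{e \<in> E. fst e \<subseteq> S}. X e = 1} = {e\<in>Z. fst e \<subseteq> S}" unfolding Z_def by auto
      also have "{e\<in>{e \<in> E. fst e \<subseteq> S}. X e = 0} = {e\<in>W. fst e \<subseteq> S}" unfolding W_def by auto
      also have "card {e\<in>Z. fst e \<subseteq> S} = card {f\<in>fst ` Z. f \<subseteq> S}" by (rule inj_card[OF injZ])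
      also have "card {e\<in>W. fst e \<subseteq> S} = card {f\<in>fst ` W. f \<subseteq> S}" by (rule inj_card[OF injW])
      finally show ?thesis .
    qed
    have B5: "\<forall>S. S \<subset> V \<and> card S \<ge> 2 \<longrightarrow> (\<Sum>e \<in> {e \<in> E. fst e \<subseteq> S}. X e) \<le> real (card S) - 1"
    proof (intro allI impI)
      fix S assume S: "S \<subset> V \<and> card S \<ge> 2"
      then have "S \<noteq> {}" by auto
      then have "card {f\<in>fst ` Z. f \<subseteq> S} < card S" using ham_sub[OF finV hZ n3] S by blast
      then show "(\<Sum>e \<in> {e \<in> E. fst e \<subseteq> S}. X e) \<le> real (card S) - 1" using cntZ[of S] by linarith
    qed
    have B6: "\<forall>S. S \<subset> V \<and> card S \<ge> 2 \<longrightarrow> (\<Sum>e \<in> {e \<in> E. fst e \<subseteq> S}. X e)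
               \<ge> real (card {e \<in> E. fst e \<subseteq> S}) - real (card S) + 1"
    proof (intro allI impI)
      fix S assume S: "S \<subset> V \<and> card S \<ge> 2"
      then have "S \<noteq> {}" by auto
      then have "card {f\<in>fst ` W. f \<subseteq> S} < card S" using ham_sub[OF finV hW n3] S by blast
      then show "(\<Sum>e \<in> {e \<in> E. fst e \<subseteq> S}. X e) \<ge> real (card {e \<in> E. fst e \<subseteq> S}) - real (card S) + 1"
        using cntZ[of S] cntES[of S] by linarith
    qed
    show ?thesis using B1 B2 B3 B4 B5 B6 by blast
  qed
  have "((\<Sum>e \<in> E. X e) = real (card V)
        \<and> (\<forall>v \<in> V. (\<Sum>e \<in> {e \<in> E. v \<in> fst e}. X e) = 2)
        \<and> (\<Sum>e \<in> (\<lambda>e. (e, True)) ` (Exs - Eys). X e)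
             \<le> real (card V) - real (card (Exs \<inter> Eys)) - 2
        \<and> (\<Sum>e \<in> (\<lambda>e. (e, False)) ` (Eys - Exs). X e)
             \<le> real (card V) - real (card (Exs \<inter> Eys)) - 2
        \<and> (\<forall>S. S \<subset> V \<and> card S \<ge> 2 \<longrightarrow>
             (\<Sum>e \<in> {e \<in> E. fst e \<subseteq> S}. X e) \<le> real (card S) - 1)
        \<and> (\<forall>S. S \<subset> V \<and> card S \<ge> 2 \<longrightarrow>
             (\<Sum>e \<in> {e \<in> E. fst e \<subseteq> S}. X e)
               \<ge> real (card {e \<in> E. fst e \<subseteq> S}) - real (card S) + 1))
     \<longleftrightarrow> (ham_copies V Z \<and> ham_copies V W \<and> fst ` Z \<noteq> Exs \<and> fst ` Z \<noteq> Eys)"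
    using fwd bwd by blast
  then show ?thesis unfolding Z_def W_def E_def .
qed


end
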